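(* Let $\delta,\delta^\perp$ be positive integers and define $$L_1=\{N\in\Delta(s_1,\dots,s_m)\mid D(N)\ge\delta\},\qquad L_2=\{N\in\Delta(s_1,\dots,s_m)\mid D^\perp(N)<\delta^\perp\}.$$ Suppose $L_2\subsetneq L_1$. Then $C(L_2)\subsetneq C(L_1)$ have codimension $\ell=\#L_1-\#L_2$, and $$M_1(C(L_1),C(L_2))\ge\delta,\qquad M_1(C(L_2)^\perp,C(L_1)^\perp)\ge\delta^\perp.$$
   Context: $q$ is a prime power. For $i=1,\dots,m$, $S_i\subseteq\mathbb{F}_q$ is nonempty with $s_i=\#S_i$; $S=S_1\times\cdots\times S_m=\{\alpha_1,\dots,\alpha_n\}$, $n=\prod_i s_i$. $\Delta(s_1,\dots,s_m)=\{X_1^{i_1}\cdots X_m^{i_m}\mid 0\le i_t<s_t\}$. For $L\subseteq\Delta(s_1,\dots,s_m)$, $C(L)\subseteq\mathbb{F}_q^n$ is the span of $(N(\alpha_1),\dots,N(\alpha_n))$, $N\in L$. For $N=X_1^{i_1}\cdots X_m^{i_m}$: $D(N)=\prod_t(s_t-i_t)$, $D^\perp(N)=\prod_t(i_t+1)$. $C^\perp$ is the Euclidean dual. For linear codes $C_2\subsetneq C_1$, $M_1(C_1,C_2)=\min\{w_H(\vec c)\mid\vec c\in C_1\setminus C_2\}$ (Hamming weight). *)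

theory Defs
  imports Complex_Main "HOL-Library.Function_Algebras"
begin

text \<open>Points of S = S_0 x ... x S_(m-1) are functions nat => 'a, extensional outside {..<m}.
Monomials X^e are exponent vectors e :: nat => nat, zero outside {..<m}.
Vectors of F_q^n are functions on the point set, taken to be 0 outside it.\<close>

definition points :: "nat \<Rightarrow> (nat \<Rightarrow> 'a::zero set) \<Rightarrow> (nat \<Rightarrow> 'a) set" where
  "points m S = {\<alpha>. (\<forall>i<m. \<alpha> i \<in> S i) \<and> (\<forall>i\<ge>m. \<alpha> i = 0)}"

definition Delta :: "nat \<Rightarrow> (nat \<Rightarrow> nat) \<Rightarrow> (nat \<Rightarrow> nat) set" where
  "Delta m s = {e. (\<forall>i<m. e i < s i) \<and> (\<forall>i\<ge>m. e i = 0)}"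

definition evalMon :: "nat \<Rightarrow> (nat \<Rightarrow> nat) \<Rightarrow> (nat \<Rightarrow> 'a::comm_ring_1) \<Rightarrow> 'a" where
  "evalMon m e \<alpha> = (\<Prod>i<m. \<alpha> i ^ e i)"

definition Dmin :: "nat \<Rightarrow> (nat \<Rightarrow> nat) \<Rightarrow> (nat \<Rightarrow> nat) \<Rightarrow> nat" where
  "Dmin m s e = (\<Prod>i<m. s i - e i)"

definition Dperp :: "nat \<Rightarrow> (nat \<Rightarrow> nat) \<Rightarrow> nat" where
  "Dperp m e = (\<Prod>i<m. e i + 1)"

definition code :: "nat \<Rightarrow> (nat \<Rightarrow> 'a::field set) \<Rightarrow> (nat \<Rightarrow> nat) set \<Rightarrow> ((nat \<Rightarrow> 'a) \<Rightarrow> 'a) set" where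
  "code m S L = {v. \<exists>c :: (nat \<Rightarrow> nat) \<Rightarrow> 'a.
      v = (\<lambda>\<alpha>. if \<alpha> \<in> points m S then (\<Sum>N\<in>L. c N * evalMon m N \<alpha>) else 0)}"

definition dual_code :: "'b set \<Rightarrow> ('b \<Rightarrow> 'a::field) set \<Rightarrow> ('b \<Rightarrow> 'a) set" where
  "dual_code P C = {v. (\<forall>x. x \<notin> P \<longrightarrow> v x = 0) \<and> (\<forall>c\<in>C. (\<Sum>x\<in>P. v x * c x) = 0)}"

definition hamming_wt :: "'b set \<Rightarrow> ('b \<Rightarrow> 'a::zero) \<Rightarrow> nat" where
  "hamming_wt P v = card {x\<in>P. v x \<noteq> 0}"

definition M1 :: "'b set \<Rightarrow> ('b \<Rightarrow> 'a::zero) set \<Rightarrow> ('b \<Rightarrow> 'a) set \<Rightarrow> nat" where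
  "M1 P C1 C2 = Min (hamming_wt P ` (C1 - C2))"

definition vscale :: "'a::field \<Rightarrow> ('b \<Rightarrow> 'a) \<Rightarrow> ('b \<Rightarrow> 'a)" where
  "vscale a v = (\<lambda>x. a * v x)"

definition vdim :: "('b \<Rightarrow> 'a::field) set \<Rightarrow> nat" where
  "vdim C = vector_space.dim (vscale :: 'a \<Rightarrow> ('b \<Rightarrow> 'a) \<Rightarrow> ('b \<Rightarrow> 'a)) C"

end

theory Submission
  imports Defs "HOL-Computational_Algebra.Polynomial" "HOL-Library.FuncSet"
begin

definition extS :: "nat \<Rightarrow> (nat \<Rightarrow> 'b set) \<Rightarrow> 'b \<Rightarrow> (nat \<Rightarrow> 'b) set" where
  "extS m A d = {f. (\<forall>i<m. f i \<in> A i) \<and> (\<forall>i\<ge>m. f i = d)}"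

lemma points_extS: "points m S = extS m S 0"
  by (simp add: points_def extS_def)

lemma Delta_extS: "Delta m s = extS m (\<lambda>i. {..<s i}) 0"
  by (simp add: Delta_def extS_def)

lemma extS_0: "extS 0 A d = {\<lambda>_. d}"
  by (auto simp: extS_def)

lemma extS_Suc_bij: "bij_betw (\<lambda>(f,b). f(m:=b)) (extS m A d \<times> A m) (extS (Suc m) A d)"
proof (rule bij_betw_byWitness[where f' = "\<lambda>g. (g(m:=d), g m)"])
  show "\<forall>a\<in>extS m A d \<times> A m. (\<lambda>g. (g(m := d), g m)) ((\<lambda>(f, b). f(m := b)) a) = a"
    by (auto simp: extS_def fun_eq_iff)
  show "\<forall>a'\<in>extS (Suc m) A d. (\<lambda>(f, b). f(m := b)) ((\<lambda>g. (g(m := d), g m)) a') = a'"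
    by auto
  show "(\<lambda>(f, b). f(m := b)) ` (extS m A d \<times> A m) \<subseteq> extS (Suc m) A d"
    by (auto simp: extS_def less_Suc_eq)
  show "(\<lambda>g. (g(m := d), g m)) ` extS (Suc m) A d \<subseteq> extS m A d \<times> A m"
    by (auto simp: extS_def)
qed

lemma sum_extS_Suc:
  "sum h (extS (Suc m) A d) = (\<Sum>b\<in>A m. \<Sum>f\<in>extS m A d. h (f(m:=b)))"
proof -
  have "sum h (extS (Suc m) A d) = (\<Sum>x\<in>extS m A d \<times> A m. h ((\<lambda>(f,b). f(m:=b)) x))"
    using sum.reindex_bij_betw[OF extS_Suc_bij, of h] by simp
  also have "\<dots> = (\<Sum>f\<in>extS m A d. \<Sum>b\<in>A m. h (f(m:=b)))"
    unfolding sum.cartesian_product by (intro sum.cong) auto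
  also have "\<dots> = (\<Sum>b\<in>A m. \<Sum>f\<in>extS m A d. h (f(m:=b)))"
    by (rule sum.swap)
  finally show ?thesis .
qed

lemma finite_extS: "(\<forall>i<m. finite (A i)) \<Longrightarrow> finite (extS m A d)"
proof (induction m)
  case 0 then show ?case by (simp add: extS_0)
next
  case (Suc m)
  have fin: "finite (extS m A d)" using Suc.IH Suc.prems by simp
  have "finite (A m)" using Suc.prems by simp
  with fin have "finite (extS m A d \<times> A m)" by (rule finite_cartesian_product)
  then show ?case using bij_betw_finite[OF extS_Suc_bij] by metis
qed

lemma card_extS: "(\<forall>i<m. finite (A i)) \<Longrightarrow> card (extS m A d) = (\<Prod>i<m. card (A i))"
proof (induction m)
  case 0 then show ?case by (simp add: extS_0)
next
  case (Suc m)
  have IH: "card (extS m A d) = (\<Prod>i<m. card (A i))" using Suc.IH Suc.prems by simp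
  have "card (extS (Suc m) A d) = card (extS m A d \<times> A m)"
    using bij_betw_same_card[OF extS_Suc_bij] by metis
  also have "\<dots> = card (extS m A d) * card (A m)" by (rule card_cartesian_product)
  finally show ?case using IH by simp
qed

lemma card_filter_sum: "finite A \<Longrightarrow> card {x\<in>A. Q x} = (\<Sum>x\<in>A. of_bool (Q x))"
proof -
  assume f: "finite A"
  have "{x\<in>A. Q x} = A \<inter> {x. Q x}" by blast
  moreover have "(\<Sum>x\<in>A. of_bool (Q x) :: nat) = card (A \<inter> {x. Q x})" using f by simp
  ultimately show ?thesis by simp
qed

lemma card_filter_extS_Suc:
  assumes "\<forall>i<Suc m. finite (A i)"
  shows "card {x\<in>extS (Suc m) A d. Q x} = (\<Sum>b\<in>A m. card {f\<in>extS m A d. Q (f(m:=b))})"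
proof -
  have f1: "finite (extS (Suc m) A d)" by (rule finite_extS) (use assms in auto)
  have f2: "finite (extS m A d)" by (rule finite_extS) (use assms in auto)
  have "card {x\<in>extS (Suc m) A d. Q x} = (\<Sum>x\<in>extS (Suc m) A d. of_bool (Q x))"
    by (rule card_filter_sum[OF f1])
  also have "\<dots> = (\<Sum>b\<in>A m. \<Sum>f\<in>extS m A d. of_bool (Q (f(m:=b))))"
    by (rule sum_extS_Suc)
  also have "\<dots> = (\<Sum>b\<in>A m. card {f\<in>extS m A d. Q (f(m:=b))})"
    by (intro sum.cong refl card_filter_sum[OF f2, symmetric])
  finally show ?thesis .
qed

lemma evalMon_upd: "evalMon m (e(m:=j)) (\<alpha>(m:=b)) = evalMon m e \<alpha>"
  unfolding evalMon_def by (rule prod.cong) auto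

lemma evalMon_Suc_upd: "evalMon (Suc m) (e(m:=j)) (\<alpha>(m:=b)) = evalMon m e \<alpha> * b ^ j"
proof -
  have "evalMon (Suc m) (e(m:=j)) (\<alpha>(m:=b)) = evalMon m (e(m:=j)) (\<alpha>(m:=b)) * b ^ j"
    unfolding evalMon_def by (simp add: prod.lessThan_Suc)
  then show ?thesis by (simp add: evalMon_upd)
qed

lemma Dmin_Suc_upd: "Dmin (Suc m) s (e(m:=j)) = Dmin m s e * (s m - j)"
proof -
  have "Dmin m s (e(m:=j)) = Dmin m s e" unfolding Dmin_def by (rule prod.cong) auto
  then show ?thesis unfolding Dmin_def by (simp add: prod.lessThan_Suc)
qed

lemma Dperp_Suc_upd: "Dperp (Suc m) (e(m:=j)) = Dperp m e * (j + 1)"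
proof -
  have "Dperp m (e(m:=j)) = Dperp m e" unfolding Dperp_def by (rule prod.cong) auto
  then show ?thesis unfolding Dperp_def by (simp add: prod.lessThan_Suc)
qed

lemma vdm:
  fixes u :: "'a::field \<Rightarrow> 'a"
  assumes R: "finite R" "b0 \<in> R" "u b0 \<noteq> 0"
  shows "\<exists>j<card R. (\<Sum>b\<in>R. b ^ j * u b) \<noteq> 0"
proof (rule ccontr)
  assume "\<not> ?thesis"
  hence Z: "\<And>j. j < card R \<Longrightarrow> (\<Sum>b\<in>R. b ^ j * u b) = 0" by auto
  define g where "g = (\<Prod>b\<in>R-{b0}. [:-b, 1:])"
  have cR: "card R \<ge> 1" using R by (metis One_nat_def Suc_leI card_gt_0_iff empty_iff)
  have "degree g \<le> sum (degree \<circ> (\<lambda>b. [:-b, 1:])) (R-{b0})"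
    unfolding g_def by (rule degree_prod_sum_le) (use R in simp)
  also have "\<dots> = card (R - {b0})" by simp
  also have "\<dots> = card R - 1" using R by simp
  finally have deg: "degree g < card R" using cR by linarith
  have "(\<Sum>b\<in>R. poly g b * u b) = (\<Sum>b\<in>R. \<Sum>i\<le>degree g. coeff g i * (b ^ i * u b))"
    by (simp add: poly_altdef sum_distrib_right mult.assoc)
  also have "\<dots> = (\<Sum>i\<le>degree g. coeff g i * (\<Sum>b\<in>R. b ^ i * u b))"
    by (subst sum.swap) (simp add: sum_distrib_left)
  also have "\<dots> = 0" using Z deg by (intro sum.neutral) auto
  finally have s0: "(\<Sum>b\<in>R. poly g b * u b) = 0" .
  have pg: "poly g b = (\<Prod>c\<in>R-{b0}. b - c)" for b
    unfolding g_def by (simp add: poly_prod)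
  have "(\<Sum>b\<in>R. poly g b * u b) = poly g b0 * u b0 + (\<Sum>b\<in>R-{b0}. poly g b * u b)"
    using R by (simp add: sum.remove)
  also have "(\<Sum>b\<in>R-{b0}. poly g b * u b) = 0"
  proof (intro sum.neutral ballI)
    fix b assume b: "b \<in> R - {b0}"
    have "poly g b = 0" unfolding pg using R b by (intro prod_zero) auto
    then show "poly g b * u b = 0" by simp
  qed
  finally have "poly g b0 * u b0 = 0" using s0 by simp
  moreover have "poly g b0 \<noteq> 0" unfolding pg using R by (simp add: prod_zero_iff)
  ultimately show False using R by simp
qed

lemma Delta_0: "Delta 0 s = {\<lambda>_. 0}" by (simp add: Delta_extS extS_0)
lemma points_0: "points 0 S = {\<lambda>_. 0}" by (simp add: points_extS extS_0)

lemma Delta_Suc_D: "e \<in> Delta (Suc m) s \<Longrightarrow> e(m:=0) \<in> Delta m s \<and> e m < s m"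
  by (auto simp: Delta_def)

lemma Delta_Suc_I: "e \<in> Delta m s \<Longrightarrow> j < s m \<Longrightarrow> e(m:=j) \<in> Delta (Suc m) s"
  by (auto simp: Delta_def)

lemma points_Suc_D: "x \<in> points (Suc m) S \<Longrightarrow> x(m:=0) \<in> points m S \<and> x m \<in> S m"
  by (auto simp: points_def)

lemma points_Suc_I: "x \<in> points m S \<Longrightarrow> b \<in> S m \<Longrightarrow> x(m:=b) \<in> points (Suc m) S"
  by (auto simp: points_def less_Suc_eq)

lemma footprint:
  fixes S :: "nat \<Rightarrow> 'a::field set" and c :: "(nat \<Rightarrow> nat) \<Rightarrow> 'a" and s :: "nat \<Rightarrow> nat"
  assumes "\<forall>i<m. finite (S i)" "\<forall>i<m. s i = card (S i)"
    "N0 \<in> Delta m s" "c N0 \<noteq> 0"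
  shows "\<exists>N\<in>Delta m s. c N \<noteq> 0 \<and> Dmin m s N \<le> card {\<alpha>\<in>points m S. (\<Sum>N\<in>Delta m s. c N * evalMon m N \<alpha>) \<noteq> 0}"
  using assms
proof (induction m arbitrary: c N0)
  case 0
  then have "N0 = (\<lambda>_. 0)" by (simp add: Delta_0)
  then show ?case using 0 by (simp add: Delta_0 points_0 Dmin_def evalMon_def)
next
  case (Suc m)
  define D' where "D' = Delta m s"
  define P' where "P' = points m S"
  define sm where "sm = s m"
  have finS: "finite (S m)" using Suc.prems by simp
  have smc: "sm = card (S m)" using Suc.prems by (simp add: sm_def)
  have finP': "finite P'" unfolding P'_def points_extS by (rule finite_extS) (use Suc.prems in auto)
  have finP: "finite (points (Suc m) S)" unfolding points_extS by (rule finite_extS) (use Suc.prems in auto)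
  define g where "g j \<alpha>' = (\<Sum>e'\<in>D'. c (e'(m:=j)) * evalMon m e' \<alpha>')" for j \<alpha>'
  define f where "f \<alpha> = (\<Sum>N\<in>Delta (Suc m) s. c N * evalMon (Suc m) N \<alpha>)" for \<alpha>
  have fexp: "f (\<alpha>'(m:=b)) = (\<Sum>j<sm. g j \<alpha>' * b ^ j)" for \<alpha>' b
  proof -
    have "f (\<alpha>'(m:=b)) = (\<Sum>j\<in>{..<s m}. \<Sum>e'\<in>extS m (\<lambda>i. {..<s i}) 0. c (e'(m:=j)) * evalMon (Suc m) (e'(m:=j)) (\<alpha>'(m:=b)))"
      unfolding f_def Delta_extS by (rule sum_extS_Suc)
    also have "\<dots> = (\<Sum>j<sm. g j \<alpha>' * b ^ j)"
      unfolding g_def sm_def D'_def Delta_extS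
      by (simp add: evalMon_Suc_upd sum_distrib_right mult.assoc)
    finally show ?thesis .
  qed
  define J where "J = {j. j < sm \<and> (\<exists>e'\<in>D'. c (e'(m:=j)) \<noteq> 0)}"
  have N0D: "N0(m:=0) \<in> D'" "N0 m < sm" using Delta_Suc_D[OF Suc.prems(3)] by (auto simp: D'_def sm_def)
  have "N0 m \<in> J" unfolding J_def using N0D Suc.prems(4) by (intro CollectI conjI bexI[of _ "N0(m:=0)"]) auto
  have finJ: "finite J" unfolding J_def by (rule finite_subset[of _ "{..<sm}"]) auto
  define t where "t = Max J"
  have tJ: "t \<in> J" unfolding t_def using finJ \<open>N0 m \<in> J\<close> by (intro Max_in) auto
  have tmax: "j \<le> t" if "j \<in> J" for j unfolding t_def using finJ that by simp
  have tsm: "t < sm" using tJ by (simp add: J_def)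
  have high: "c (e'(m:=j)) = 0" if "t < j" "j < sm" "e' \<in> D'" for j e'
  proof (rule ccontr)
    assume "c (e'(m:=j)) \<noteq> 0"
    then have "j \<in> J" unfolding J_def using that by auto
    then show False using tmax that by fastforce
  qed
  obtain e0 where e0: "e0 \<in> D'" "c (e0(m:=t)) \<noteq> 0" using tJ by (auto simp: J_def)
  have "\<exists>N\<in>Delta m s. c (N(m:=t)) \<noteq> 0 \<and> Dmin m s N \<le> card {\<alpha>\<in>points m S. (\<Sum>N\<in>Delta m s. c (N(m:=t)) * evalMon m N \<alpha>) \<noteq> 0}"
    by (rule Suc.IH[of e0 "\<lambda>N. c (N(m:=t))"]) (use Suc.prems e0 in \<open>auto simp: D'_def\<close>)
  then obtain e' where e': "e' \<in> D'" "c (e'(m:=t)) \<noteq> 0" and Dm: "Dmin m s e' \<le> card {\<alpha>'\<in>P'. g t \<alpha>' \<noteq> 0}"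
    unfolding g_def D'_def P'_def by blast
  define A where "A = {\<alpha>'\<in>P'. g t \<alpha>' \<noteq> 0}"
  define Bs where "Bs \<alpha>' = {b\<in>S m. f (\<alpha>'(m:=b)) \<noteq> 0}" for \<alpha>'
  have Bbig: "sm - t \<le> card (Bs \<alpha>')" if "\<alpha>' \<in> A" for \<alpha>'
  proof -
    define p where "p = (\<Sum>j<sm. monom (g j \<alpha>') j)"
    have pp: "poly p b = f (\<alpha>'(m:=b))" for b by (simp add: p_def poly_sum poly_monom fexp)
    have cp: "coeff p k = (if k < sm then g k \<alpha>' else 0)" for k
      by (simp add: p_def coeff_sum coeff_monom)
    have gt: "g t \<alpha>' \<noteq> 0" using that by (simp add: A_def)
    have pnz: "p \<noteq> 0" using cp[of t] tsm gt by auto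
    have "degree p \<le> t"
    proof (rule degree_le, intro allI impI)
      fix k assume "t < k"
      show "coeff p k = 0"
      proof (cases "k < sm")
        case True
        then have "g k \<alpha>' = 0" unfolding g_def using high \<open>t < k\<close> by (intro sum.neutral) auto
        then show ?thesis using cp by simp
      qed (simp add: cp)
    qed
    then have roots: "card {b. poly p b = 0} \<le> t" using card_poly_roots_bound[OF pnz] by linarith
    have finR: "finite {b. poly p b = 0}" by (rule poly_roots_finite[OF pnz])
    have finB: "finite (Bs \<alpha>')" unfolding Bs_def using finS by simp
    have "S m \<subseteq> Bs \<alpha>' \<union> {b. poly p b = 0}" unfolding Bs_def pp by auto
    then have "card (S m) \<le> card (Bs \<alpha>' \<union> {b. poly p b = 0})" using finR finB by (intro card_mono) auto
    also have "\<dots> \<le> card (Bs \<alpha>') + card {b. poly p b = 0}" by (rule card_Un_le)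
    finally show ?thesis using roots smc by linarith
  qed
  define T where "T = {\<alpha>\<in>points (Suc m) S. f \<alpha> \<noteq> 0}"
  have finA: "finite A" unfolding A_def using finP' by simp
  have bij: "bij_betw (\<lambda>(f,b). f(m:=b)) (P' \<times> S m) (points (Suc m) S)"
    unfolding P'_def points_extS by (rule extS_Suc_bij)
  have sub: "Sigma A Bs \<subseteq> P' \<times> S m" by (auto simp: A_def Bs_def)
  have inj: "inj_on (\<lambda>(f,b). f(m:=b)) (Sigma A Bs)"
    using bij_betw_imp_inj_on[OF bij] sub by (rule inj_on_subset)
  have img: "(\<lambda>(f,b). f(m:=b)) ` Sigma A Bs \<subseteq> T"
  proof
    fix x assume "x \<in> (\<lambda>(f,b). f(m:=b)) ` Sigma A Bs"
    then obtain a b where ab: "a \<in> A" "b \<in> Bs a" "x = a(m:=b)" by auto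
    have "a \<in> P'" "b \<in> S m" using ab by (auto simp: A_def Bs_def)
    then have "x \<in> points (Suc m) S" unfolding ab(3) P'_def by (rule points_Suc_I)
    then show "x \<in> T" using ab by (simp add: T_def Bs_def)
  qed
  have finT: "finite T" unfolding T_def using finP by simp
  have "card (Sigma A Bs) \<le> card T" by (rule card_inj_on_le[OF inj img finT])
  moreover have "card (Sigma A Bs) = (\<Sum>a\<in>A. card (Bs a))"
  proof (rule card_SigmaI[OF finA])
    show "\<forall>a\<in>A. finite (Bs a)" unfolding Bs_def using finS by simp
  qed
  moreover have "card A * (sm - t) \<le> (\<Sum>a\<in>A. card (Bs a))"
    using sum_bounded_below[of A "sm - t" "\<lambda>a. card (Bs a)"] Bbig by simp
  moreover have "Dmin (Suc m) s (e'(m:=t)) = Dmin m s e' * (sm - t)"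
    by (simp add: Dmin_Suc_upd sm_def)
  moreover have "Dmin m s e' * (sm - t) \<le> card A * (sm - t)" using Dm by (simp add: A_def)
  ultimately have "Dmin (Suc m) s (e'(m:=t)) \<le> card T" by linarith
  moreover have "e'(m:=t) \<in> Delta (Suc m) s" using e' tsm by (intro Delta_Suc_I) (auto simp: D'_def sm_def)
  ultimately show ?case using e' unfolding T_def f_def by blast
qed

lemma dual_fp:
  fixes S :: "nat \<Rightarrow> 'a::field set" and v :: "(nat \<Rightarrow> 'a) \<Rightarrow> 'a" and s :: "nat \<Rightarrow> nat"
  assumes "\<forall>i<m. finite (S i)" "\<forall>i<m. s i = card (S i)" "x0 \<in> points m S" "v x0 \<noteq> 0"
  shows "\<exists>e\<in>Delta m s. (\<Sum>\<alpha>\<in>points m S. v \<alpha> * evalMon m e \<alpha>) \<noteq> 0 \<and> Dperp m e \<le> card {\<alpha>\<in>points m S. v \<alpha> \<noteq> 0}"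
  using assms
proof (induction m arbitrary: v x0)
  case 0
  then have x: "x0 = (\<lambda>_. 0)" by (simp add: points_0)
  then have "{\<alpha>\<in>points 0 S. v \<alpha> \<noteq> 0} = {\<lambda>_. 0}" using 0 by (auto simp: points_0)
  then show ?case using 0 x by (simp add: Delta_0 points_0 Dperp_def evalMon_def)
next
  case (Suc m)
  define P' where "P' = points m S"
  define sm where "sm = s m"
  have finS: "finite (S m)" using Suc.prems by simp
  have smc: "sm = card (S m)" using Suc.prems by (simp add: sm_def)
  have finP': "finite P'" unfolding P'_def points_extS by (rule finite_extS) (use Suc.prems in auto)
  define w where "w b = card {\<alpha>'\<in>P'. v (\<alpha>'(m:=b)) \<noteq> 0}" for b
  define B where "B = {b\<in>S m. \<exists>\<alpha>'\<in>P'. v (\<alpha>'(m:=b)) \<noteq> 0}"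
  have x0: "x0(m:=0) \<in> P'" "x0 m \<in> S m" using points_Suc_D[OF Suc.prems(3)] by (auto simp: P'_def)
  have "(x0(m:=0))(m:= x0 m) = x0" by simp
  then have "x0 m \<in> B" unfolding B_def using x0 Suc.prems(4) by (intro CollectI conjI bexI[of _ "x0(m:=0)"]) auto
  have finB: "finite B" unfolding B_def using finS by simp
  have "Min (w ` B) \<in> w ` B" using finB \<open>x0 m \<in> B\<close> by (intro Min_in) auto
  then obtain b0 where b0B: "b0 \<in> B" and b0w: "w b0 = Min (w ` B)" by auto
  have b0min: "w b0 \<le> w b" if "b \<in> B" for b unfolding b0w using finB that by simp
  obtain a0 where a0: "a0 \<in> P'" "v (a0(m:=b0)) \<noteq> 0" using b0B by (auto simp: B_def)
  have "\<exists>e\<in>Delta m s. (\<Sum>\<alpha>\<in>points m S. v (\<alpha>(m:=b0)) * evalMon m e \<alpha>) \<noteq> 0 \<and> Dperp m e \<le> card {\<alpha>\<in>points m S. v (\<alpha>(m:=b0)) \<noteq> 0}"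
    by (rule Suc.IH[of a0 "\<lambda>\<alpha>. v (\<alpha>(m:=b0))"]) (use Suc.prems a0 in \<open>auto simp: P'_def\<close>)
  then obtain e' where e': "e' \<in> Delta m s" "(\<Sum>\<alpha>'\<in>P'. v (\<alpha>'(m:=b0)) * evalMon m e' \<alpha>') \<noteq> 0"
    and Dp: "Dperp m e' \<le> w b0"
    unfolding P'_def w_def by blast
  define u where "u b = (\<Sum>\<alpha>'\<in>P'. v (\<alpha>'(m:=b)) * evalMon m e' \<alpha>')" for b
  define R where "R = {b\<in>S m. u b \<noteq> 0}"
  have finR: "finite R" unfolding R_def using finS by simp
  have b0S: "b0 \<in> S m" using b0B by (simp add: B_def)
  have b0R: "b0 \<in> R" unfolding R_def u_def using b0S e' by simp
  have RB: "R \<subseteq> B"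
  proof
    fix b assume "b \<in> R"
    then have bS: "b \<in> S m" and "u b \<noteq> 0" by (auto simp: R_def)
    then obtain a where "a \<in> P'" "v (a(m:=b)) * evalMon m e' a \<noteq> 0"
      unfolding u_def by (meson sum.not_neutral_contains_not_neutral)
    then show "b \<in> B" unfolding B_def using bS by auto
  qed
  have RS: "R \<subseteq> S m" unfolding R_def by auto
  obtain j where j: "j < card R" "(\<Sum>b\<in>R. b ^ j * u b) \<noteq> 0"
    using vdm[OF finR b0R] b0R by (auto simp: R_def)
  have cRS: "card R \<le> sm" unfolding smc using finS RS by (rule card_mono)
  have eD: "e'(m:=j) \<in> Delta (Suc m) s" using e' j cRS by (intro Delta_Suc_I) (auto simp: sm_def)
  have "(\<Sum>\<alpha>\<in>points (Suc m) S. v \<alpha> * evalMon (Suc m) (e'(m:=j)) \<alpha>)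
      = (\<Sum>b\<in>S m. \<Sum>\<alpha>'\<in>extS m S 0. v (\<alpha>'(m:=b)) * evalMon (Suc m) (e'(m:=j)) (\<alpha>'(m:=b)))"
    unfolding points_extS by (rule sum_extS_Suc)
  also have "\<dots> = (\<Sum>b\<in>S m. b ^ j * u b)"
    unfolding u_def P'_def points_extS
    by (simp add: evalMon_Suc_upd sum_distrib_left mult_ac)
  also have "\<dots> = (\<Sum>b\<in>R. b ^ j * u b)"
    by (rule sum.mono_neutral_right[OF finS RS]) (auto simp: R_def)
  finally have S1: "(\<Sum>\<alpha>\<in>points (Suc m) S. v \<alpha> * evalMon (Suc m) (e'(m:=j)) \<alpha>) \<noteq> 0" using j by simp
  have "Dperp (Suc m) (e'(m:=j)) = Dperp m e' * (j + 1)" by (rule Dperp_Suc_upd)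
  also have "\<dots> \<le> w b0 * card R" using Dp j by (intro mult_le_mono) auto
  also have "\<dots> \<le> (\<Sum>b\<in>R. w b)"
    using sum_bounded_below[of R "w b0" w] b0min RB by (auto simp: mult.commute)
  also have "\<dots> \<le> (\<Sum>b\<in>S m. w b)" by (rule sum_mono2[OF finS RS]) simp
  also have "\<dots> = card {\<alpha>\<in>points (Suc m) S. v \<alpha> \<noteq> 0}"
    unfolding points_extS w_def P'_def
    by (rule card_filter_extS_Suc[symmetric]) (use Suc.prems in auto)
  finally show ?case using S1 eD by blast
qed

lemma sum_fun_apply: "(sum f A) x = (\<Sum>a\<in>A. f a x)"
proof (cases "finite A")
  case True then show ?thesis by (induction A rule: finite_induct) auto
qed simp

lemma sum_ind:
  assumes "finite D" "e \<in> D"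
  shows "(\<Sum>N\<in>D. (if N = e then 1 else 0) * f N) = (f e :: 'a::comm_ring_1)"
proof -
  have "(\<Sum>N\<in>D. (if N = e then 1 else 0) * f N) = (\<Sum>N\<in>D. if N = e then f N else 0)"
    by (intro sum.cong) auto
  also have "\<dots> = f e" using assms by (simp add: sum.delta')
  finally show ?thesis .
qed

lemma M1_ge:
  assumes "finite P" "C1 - C2 \<noteq> {}" "\<forall>x\<in>C1 - C2. k \<le> hamming_wt P x"
  shows "k \<le> M1 P C1 C2"
proof -
  have "hamming_wt P ` (C1 - C2) \<subseteq> {..card P}"
    unfolding hamming_wt_def using assms(1) by (auto intro: card_mono)
  then have "finite (hamming_wt P ` (C1 - C2))" by (rule finite_subset) simp
  then show ?thesis unfolding M1_def using assms by simp
qed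

lemma Dmin_pos: "N \<in> Delta m s \<Longrightarrow> Dmin m s N > 0"
  unfolding Dmin_def Delta_def by (auto intro: prod_pos)

lemma card_funs0:
  fixes P :: "'b set"
  assumes "finite P"
  shows "card {v :: 'b \<Rightarrow> 'a::{finite,zero}. \<forall>x. x \<notin> P \<longrightarrow> v x = 0} = card (UNIV :: 'a set) ^ card P"
proof -
  have "bij_betw (\<lambda>v. restrict v P) {v :: 'b \<Rightarrow> 'a. \<forall>x. x \<notin> P \<longrightarrow> v x = 0} (P \<rightarrow>\<^sub>E (UNIV :: 'a set))"
  proof (rule bij_betw_byWitness[where f' = "\<lambda>g x. if x \<in> P then g x else 0"])
    show "\<forall>a\<in>{v. \<forall>x. x \<notin> P \<longrightarrow> v x = 0}. (\<lambda>x. if x \<in> P then restrict a P x else 0) = a"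
      by (auto simp: fun_eq_iff)
    show "\<forall>a'\<in>P \<rightarrow>\<^sub>E UNIV. restrict (\<lambda>x. if x \<in> P then a' x else 0) P = a'"
      by (auto simp: fun_eq_iff PiE_def extensional_def)
    show "(\<lambda>v. restrict v P) ` {v. \<forall>x. x \<notin> P \<longrightarrow> v x = 0} \<subseteq> P \<rightarrow>\<^sub>E UNIV" by auto
    show "(\<lambda>g x. if x \<in> P then g x else 0) ` (P \<rightarrow>\<^sub>E UNIV) \<subseteq> {v. \<forall>x. x \<notin> P \<longrightarrow> v x = 0}" by auto
  qed
  then have "card {v :: 'b \<Rightarrow> 'a. \<forall>x. x \<notin> P \<longrightarrow> v x = 0} = card (P \<rightarrow>\<^sub>E (UNIV :: 'a set))"
    by (rule bij_betw_same_card)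
  also have "\<dots> = card (UNIV :: 'a set) ^ card P" using assms by (simp add: card_PiE)
  finally show ?thesis .
qed

theorem mainTheorem2:
  fixes m :: nat and S :: "nat \<Rightarrow> 'a::{finite,field} set"
    and \<delta> \<delta>perp :: nat
  assumes S_ne: "\<forall>i<m. S i \<noteq> {}"
    and pos: "\<delta> > 0" "\<delta>perp > 0"
  defines "P \<equiv> points m S"
    and "L1 \<equiv> {N \<in> Delta m (\<lambda>i. card (S i)). Dmin m (\<lambda>i. card (S i)) N \<ge> \<delta>}"
    and "L2 \<equiv> {N \<in> Delta m (\<lambda>i. card (S i)). Dperp m N < \<delta>perp}"
  assumes sub: "L2 \<subset> L1"
  shows "code m S L2 \<subset> code m S L1
    \<and> vdim (code m S L1) = vdim (code m S L2) + (card L1 - card L2)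
    \<and> M1 P (code m S L1) (code m S L2) \<ge> \<delta>
    \<and> M1 P (dual_code P (code m S L2)) (dual_code P (code m S L1)) \<ge> \<delta>perp"
proof -
  define s where "s = (\<lambda>i. card (S i))"
  define D where "D = Delta m s"
  have L1: "L1 = {N \<in> D. Dmin m s N \<ge> \<delta>}" unfolding L1_def D_def s_def ..
  have L2: "L2 = {N \<in> D. Dperp m N < \<delta>perp}" unfolding L2_def D_def s_def ..
  have finS: "\<forall>i<m. finite (S i)" by simp
  have sS: "\<forall>i<m. s i = card (S i)" by (simp add: s_def)
  have finP: "finite P" unfolding P_def points_extS by (rule finite_extS) simp
  have finD: "finite D" unfolding D_def Delta_extS by (rule finite_extS) simp
  have cardP: "card P = (\<Prod>i<m. card (S i))" unfolding P_def points_extS by (rule card_extS) simp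
  have cardD: "card D = (\<Prod>i<m. card (S i))" unfolding D_def Delta_extS
    by (subst card_extS) (simp_all add: s_def)
  have L1D: "L1 \<subseteq> D" and L2D: "L2 \<subseteq> D" unfolding L1 L2 by auto
  obtain N0 where N0: "N0 \<in> L1" "N0 \<notin> L2" using sub by blast
  have N0D: "N0 \<in> D" using N0 L1D by blast
  define vec where "vec c = (\<lambda>\<alpha>. if \<alpha> \<in> P then \<Sum>N\<in>D. c N * evalMon m N \<alpha> else 0)" for c :: "(nat \<Rightarrow> nat) \<Rightarrow> 'a"
  define ind where "ind e = (\<lambda>N. if N = e then (1::'a) else 0)" for e :: "nat \<Rightarrow> nat"
  define ev where "ev e = vec (ind e)" for e
  have ev_apply: "ev e \<alpha> = (if \<alpha> \<in> P then evalMon m e \<alpha> else 0)" if "e \<in> D" for e \<alpha>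
    unfolding ev_def vec_def ind_def using sum_ind[OF finD that, of "\<lambda>N. evalMon m N \<alpha>"] by simp
  have inj0: "c N = 0" if z: "\<forall>\<alpha>\<in>P. (\<Sum>N\<in>D. c N * evalMon m N \<alpha>) = 0" and N: "N \<in> D" for c N
  proof (rule ccontr)
    assume "c N \<noteq> 0"
    then obtain N' where N': "N' \<in> D" "Dmin m s N' \<le> card {\<alpha>\<in>P. (\<Sum>N\<in>D. c N * evalMon m N \<alpha>) \<noteq> 0}"
      using footprint[OF finS sS, of N c] N unfolding D_def P_def by blast
    have E: "{\<alpha>\<in>P. (\<Sum>N\<in>D. c N * evalMon m N \<alpha>) \<noteq> 0} = {}" using z by auto
    have "Dmin m s N' \<le> 0" using N'(2) unfolding E by simp
    moreover have "Dmin m s N' > 0" using Dmin_pos[of N' m s] N'(1) unfolding D_def by blast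
    ultimately show False by simp
  qed
  have vec_eq: "a N = b N" if "vec a = vec b" "N \<in> D" for a b N
  proof -
    have "\<forall>\<alpha>\<in>P. (\<Sum>N\<in>D. (a N - b N) * evalMon m N \<alpha>) = 0"
    proof
      fix \<alpha> assume "\<alpha> \<in> P"
      then have "(\<Sum>N\<in>D. a N * evalMon m N \<alpha>) = (\<Sum>N\<in>D. b N * evalMon m N \<alpha>)"
        using fun_cong[OF that(1), of \<alpha>] by (simp add: vec_def)
      then show "(\<Sum>N\<in>D. (a N - b N) * evalMon m N \<alpha>) = 0"
        by (simp add: left_diff_distrib sum_subtractf)
    qed
    then have "a N - b N = 0" using inj0[of "\<lambda>N. a N - b N"] that(2) by blast
    then show ?thesis by simp
  qed
  have code_char: "code m S L = {vec c | c. \<forall>N. N \<notin> L \<longrightarrow> c N = 0}" if LD: "L \<subseteq> D" for L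
  proof (intro set_eqI iffI)
    fix v assume "v \<in> code m S L"
    then obtain c where c: "v = (\<lambda>\<alpha>. if \<alpha> \<in> points m S then (\<Sum>N\<in>L. c N * evalMon m N \<alpha>) else 0)"
      by (auto simp: code_def)
    define c' where "c' N = (if N \<in> L then c N else 0)" for N
    have cc: "(\<Sum>N\<in>D. c' N * evalMon m N \<alpha>) = (\<Sum>N\<in>L. c N * evalMon m N \<alpha>)" for \<alpha>
    proof -
      have "(\<Sum>N\<in>D. c' N * evalMon m N \<alpha>) = (\<Sum>N\<in>D. if N \<in> L then c N * evalMon m N \<alpha> else 0)"
        by (intro sum.cong) (auto simp: c'_def)
      also have "\<dots> = (\<Sum>N\<in>D \<inter> L. c N * evalMon m N \<alpha>)" by (rule sum.inter_restrict[OF finD, symmetric])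
      also have "D \<inter> L = L" using LD by blast
      finally show ?thesis .
    qed
    have "v = vec c'" unfolding c vec_def P_def by (intro ext) (simp only: cc)
    moreover have "\<forall>N. N \<notin> L \<longrightarrow> c' N = 0" by (simp add: c'_def)
    ultimately show "v \<in> {vec c | c. \<forall>N. N \<notin> L \<longrightarrow> c N = 0}" by blast
  next
    fix v assume "v \<in> {vec c | c. \<forall>N. N \<notin> L \<longrightarrow> c N = 0}"
    then obtain c where v: "v = vec c" and c: "\<forall>N. N \<notin> L \<longrightarrow> c N = 0" by blast
    have cc: "(\<Sum>N\<in>D. c N * evalMon m N \<alpha>) = (\<Sum>N\<in>L. c N * evalMon m N \<alpha>)" for \<alpha>
      by (rule sum.mono_neutral_right[OF finD LD]) (use c in auto)
    have "v = (\<lambda>\<alpha>. if \<alpha> \<in> points m S then (\<Sum>N\<in>L. c N * evalMon m N \<alpha>) else 0)"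
      unfolding v vec_def P_def by (intro ext) (simp only: cc)
    then show "v \<in> code m S L" unfolding code_def by blast
  qed
  have ev_in: "ev e \<in> code m S L" if "L \<subseteq> D" "e \<in> L" for L e
    unfolding code_char[OF that(1)] ev_def using that(2) by (auto simp: ind_def)
  have part1: "code m S L2 \<subset> code m S L1"
  proof
    show "code m S L2 \<subseteq> code m S L1"
      unfolding code_char[OF L1D] code_char[OF L2D] using sub by blast
    show "code m S L2 \<noteq> code m S L1"
    proof
      assume eq: "code m S L2 = code m S L1"
      have "ev N0 \<in> code m S L2" unfolding eq by (rule ev_in[OF L1D N0(1)])
      then obtain c where c: "ev N0 = vec c" "\<forall>N. N \<notin> L2 \<longrightarrow> c N = 0"
        unfolding code_char[OF L2D] by blast
      have "ind N0 N0 = c N0" using vec_eq[OF c(1)[unfolded ev_def] N0D] .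
      then show False using c(2) N0(2) by (simp add: ind_def)
    qed
  qed
  have inj_ev: "inj_on ev D"
  proof (rule inj_onI)
    fix N1 N2 assume "N1 \<in> D" "N2 \<in> D" "ev N1 = ev N2"
    then have "ind N1 N1 = ind N2 N1" using vec_eq[of "ind N1" "ind N2" N1] unfolding ev_def by blast
    then show "N1 = N2" by (simp add: ind_def split: if_splits)
  qed
  have vec_sum: "vec c = (\<Sum>N\<in>L'. vscale (c N) (ev N))" if L'D: "L' \<subseteq> D" and c0: "\<forall>N. N \<notin> L' \<longrightarrow> c N = 0" for c L'
  proof (rule ext)
    fix \<alpha>
    have "(\<Sum>N\<in>L'. vscale (c N) (ev N)) \<alpha> = (\<Sum>N\<in>L'. c N * ev N \<alpha>)" by (simp add: sum_fun_apply vscale_def)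
    also have "\<dots> = vec c \<alpha>"
    proof (cases "\<alpha> \<in> P")
      case True
      have "(\<Sum>N\<in>L'. c N * ev N \<alpha>) = (\<Sum>N\<in>L'. c N * evalMon m N \<alpha>)"
        by (intro sum.cong refl) (use True L'D ev_apply in auto)
      also have "\<dots> = (\<Sum>N\<in>D. c N * evalMon m N \<alpha>)"
        by (rule sum.mono_neutral_right[OF finD L'D, symmetric]) (use c0 in auto)
      finally show ?thesis using True by (simp add: vec_def)
    next
      case False
      have "(\<Sum>N\<in>L'. c N * ev N \<alpha>) = 0"
        by (intro sum.neutral ballI) (use False L'D ev_apply in auto)
      then show ?thesis using False by (simp add: vec_def)
    qed
    finally show "vec c \<alpha> = (\<Sum>N\<in>L'. vscale (c N) (ev N)) \<alpha>" by simp
  qed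
  have dimL: "vdim (code m S L) = card L" if LD: "L \<subseteq> D" for L
  proof -
    interpret V: vector_space "vscale :: 'a \<Rightarrow> ((nat \<Rightarrow> 'a) \<Rightarrow> 'a) \<Rightarrow> ((nat \<Rightarrow> 'a) \<Rightarrow> 'a)"
      by unfold_locales (simp_all add: vscale_def fun_eq_iff algebra_simps)
    have span: "code m S L = V.span (ev ` L)"
    proof
      show "V.span (ev ` L) \<subseteq> code m S L"
      proof (rule V.span_minimal)
        show "ev ` L \<subseteq> code m S L" using ev_in[OF LD] by blast
        show "V.subspace (code m S L)"
        proof (rule V.subspaceI)
          show "0 \<in> code m S L"
          proof -
            have "0 = vec (\<lambda>_. 0)" by (simp add: vec_def fun_eq_iff)
            then show ?thesis unfolding code_char[OF LD] by auto
          qed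
          fix x y assume "x \<in> code m S L" "y \<in> code m S L"
          then obtain a b where x: "x = vec a" "\<forall>N. N \<notin> L \<longrightarrow> a N = 0"
            and y: "y = vec b" "\<forall>N. N \<notin> L \<longrightarrow> b N = 0" unfolding code_char[OF LD] by blast
          have "x + y = vec (\<lambda>N. a N + b N)"
            unfolding x y vec_def by (simp add: fun_eq_iff sum.distrib distrib_right)
          then show "x + y \<in> code m S L" unfolding code_char[OF LD] using x y by auto
        next
          fix k x assume "x \<in> code m S L"
          then obtain a where x: "x = vec a" "\<forall>N. N \<notin> L \<longrightarrow> a N = 0"
            unfolding code_char[OF LD] by blast
          have "vscale k x = vec (\<lambda>N. k * a N)"
            unfolding x vec_def vscale_def by (simp add: fun_eq_iff sum_distrib_left mult.assoc)
          then show "vscale k x \<in> code m S L" unfolding code_char[OF LD] using x by auto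
        qed
      qed
      show "code m S L \<subseteq> V.span (ev ` L)"
      proof
        fix v assume "v \<in> code m S L"
        then obtain c where v: "v = vec c" and c: "\<forall>N. N \<notin> L \<longrightarrow> c N = 0"
          unfolding code_char[OF LD] by blast
        have "v = (\<Sum>N\<in>L. vscale (c N) (ev N))" unfolding v by (rule vec_sum[OF LD c])
        also have "\<dots> \<in> V.span (ev ` L)"
          by (intro V.span_sum V.span_scale V.span_base) auto
        finally show "v \<in> V.span (ev ` L)" .
      qed
    qed
    have indep: "V.independent (ev ` L)"
    proof
      assume "V.dependent (ev ` L)"
      then obtain t u where t: "finite t" "t \<subseteq> ev ` L" "(\<Sum>v\<in>t. vscale (u v) v) = 0" "\<exists>v\<in>t. u v \<noteq> 0"
        unfolding V.dependent_explicit by blast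
      from t(2) obtain L' where L': "L' \<subseteq> L" "t = ev ` L'" unfolding subset_image_iff by blast
      have L'D: "L' \<subseteq> D" using L' LD by blast
      have injL': "inj_on ev L'" using inj_on_subset[OF inj_ev L'D] .
      define c where "c N = (if N \<in> L' then u (ev N) else 0)" for N
      have "vec c = (\<Sum>N\<in>L'. vscale (c N) (ev N))" by (rule vec_sum[OF L'D]) (simp add: c_def)
      also have "\<dots> = (\<Sum>N\<in>L'. vscale (u (ev N)) (ev N))" by (intro sum.cong) (auto simp: c_def)
      also have "\<dots> = (\<Sum>v\<in>t. vscale (u v) v)" unfolding L'(2) by (simp add: sum.reindex[OF injL'])
      also have "\<dots> = 0" by (rule t(3))
      finally have vc0: "vec c = 0" .
      obtain v where v: "v \<in> t" "u v \<noteq> 0" using t(4) by blast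
      then obtain N where N: "N \<in> L'" "v = ev N" using L'(2) by blast
      have "\<forall>\<alpha>\<in>P. (\<Sum>N\<in>D. c N * evalMon m N \<alpha>) = 0"
      proof
        fix \<alpha> assume "\<alpha> \<in> P"
        then show "(\<Sum>N\<in>D. c N * evalMon m N \<alpha>) = 0" using fun_cong[OF vc0, of \<alpha>] by (simp add: vec_def)
      qed
      then have "c N = 0" using inj0 N(1) L'D by blast
      then show False using N v by (simp add: c_def)
    qed
    have "vdim (code m S L) = V.dim (V.span (ev ` L))" unfolding vdim_def span ..
    also have "\<dots> = card (ev ` L)" by (rule V.dim_span_eq_card_independent[OF indep])
    also have "\<dots> = card L" by (rule card_image[OF inj_on_subset[OF inj_ev LD]])
    finally show ?thesis .
  qed
  have part2: "vdim (code m S L1) = vdim (code m S L2) + (card L1 - card L2)"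
  proof -
    have "card L2 \<le> card L1" using sub finD L1D by (meson card_mono finite_subset psubset_imp_subset)
    then show ?thesis using dimL[OF L1D] dimL[OF L2D] by simp
  qed
  have zero_in: "vec (\<lambda>_. 0) \<in> code m S L" if "L \<subseteq> D" for L
    unfolding code_char[OF that] by blast
  have part3: "M1 P (code m S L1) (code m S L2) \<ge> \<delta>"
  proof (rule M1_ge[OF finP])
    show "code m S L1 - code m S L2 \<noteq> {}" using part1 by blast
    show "\<forall>x\<in>code m S L1 - code m S L2. \<delta> \<le> hamming_wt P x"
    proof
      fix x assume x: "x \<in> code m S L1 - code m S L2"
      then obtain c where xc: "x = vec c" and c: "\<forall>N. N \<notin> L1 \<longrightarrow> c N = 0"
        unfolding code_char[OF L1D] by blast
      have "\<exists>N0\<in>D. c N0 \<noteq> 0"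
      proof (rule ccontr)
        assume "\<not> ?thesis"
        then have "vec c = vec (\<lambda>_. 0)" unfolding vec_def by (intro ext) simp
        then show False using x xc zero_in[OF L2D] by simp
      qed
      then obtain N1 where N1: "N1 \<in> D" "c N1 \<noteq> 0" by blast
      obtain N where N: "N \<in> D" "c N \<noteq> 0"
        and DN: "Dmin m s N \<le> card {\<alpha>\<in>P. (\<Sum>N\<in>D. c N * evalMon m N \<alpha>) \<noteq> 0}"
        using footprint[OF finS sS, of N1 c] N1 unfolding D_def P_def by blast
      have "N \<in> L1" using N c by blast
      then have "\<delta> \<le> Dmin m s N" unfolding L1 by simp
      moreover have "{\<alpha>\<in>P. (\<Sum>N\<in>D. c N * evalMon m N \<alpha>) \<noteq> 0} = {\<alpha>\<in>P. x \<alpha> \<noteq> 0}"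
        unfolding xc vec_def by auto
      ultimately show "\<delta> \<le> hamming_wt P x" using DN unfolding hamming_wt_def by simp
    qed
  qed
  have swap: "(\<Sum>x\<in>P. v x * vec a x) = (\<Sum>N\<in>D. a N * (\<Sum>x\<in>P. v x * evalMon m N x))" for v a
  proof -
    have "(\<Sum>x\<in>P. v x * vec a x) = (\<Sum>x\<in>P. \<Sum>N\<in>D. a N * (v x * evalMon m N x))"
      unfolding vec_def by (intro sum.cong refl) (simp add: sum_distrib_left mult_ac)
    also have "\<dots> = (\<Sum>N\<in>D. a N * (\<Sum>x\<in>P. v x * evalMon m N x))"
      by (subst sum.swap) (simp add: sum_distrib_left)
    finally show ?thesis .
  qed
  have swap_ind: "(\<Sum>x\<in>P. v x * ev e x) = (\<Sum>x\<in>P. v x * evalMon m e x)" if "e \<in> D" for v e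
    unfolding ev_def swap ind_def by (rule sum_ind[OF finD that])
  define VP where "VP = {v :: (nat \<Rightarrow> 'a) \<Rightarrow> 'a. \<forall>x. x \<notin> P \<longrightarrow> v x = 0}"
  define Phi where "Phi v = restrict (\<lambda>e. \<Sum>\<alpha>\<in>P. v \<alpha> * evalMon m e \<alpha>) D" for v :: "(nat \<Rightarrow> 'a) \<Rightarrow> 'a"
  have dualfp: "\<exists>e\<in>D. (\<Sum>\<alpha>\<in>P. v \<alpha> * evalMon m e \<alpha>) \<noteq> 0 \<and> Dperp m e \<le> card {\<alpha>\<in>P. v \<alpha> \<noteq> 0}"
    if "x0 \<in> P" "v x0 \<noteq> 0" for v x0
    using dual_fp[OF finS sS, of x0 v] that unfolding D_def P_def by blast
  have injPhi: "inj_on Phi VP"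
  proof (rule inj_onI, rule ccontr)
    fix v w assume v: "v \<in> VP" and w: "w \<in> VP" and eq: "Phi v = Phi w" and ne: "v \<noteq> w"
    then obtain x0 where x0: "v x0 \<noteq> w x0" by (auto simp: fun_eq_iff)
    have "x0 \<in> P"
    proof (rule ccontr)
      assume "x0 \<notin> P"
      then have "v x0 = 0" "w x0 = 0" using v w by (simp_all add: VP_def)
      then show False using x0 by simp
    qed
    then obtain e where e: "e \<in> D" "(\<Sum>\<alpha>\<in>P. (v \<alpha> - w \<alpha>) * evalMon m e \<alpha>) \<noteq> 0"
      using dualfp[of x0 "\<lambda>\<alpha>. v \<alpha> - w \<alpha>"] x0 by auto
    have "Phi v e = Phi w e" using eq by simp
    then have "(\<Sum>\<alpha>\<in>P. v \<alpha> * evalMon m e \<alpha>) = (\<Sum>\<alpha>\<in>P. w \<alpha> * evalMon m e \<alpha>)"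
      using e(1) by (simp add: Phi_def)
    then have "(\<Sum>\<alpha>\<in>P. (v \<alpha> - w \<alpha>) * evalMon m e \<alpha>) = 0"
      by (simp add: left_diff_distrib sum_subtractf)
    then show False using e(2) by simp
  qed
  have PhiPi: "Phi ` VP \<subseteq> D \<rightarrow>\<^sub>E (UNIV :: 'a set)"
    unfolding Phi_def by (rule image_subsetI) (simp only: restrict_PiE_iff, blast)
  have cPD: "card P = card D" using cardP cardD by simp
  have "card (Phi ` VP) = card VP" by (rule card_image[OF injPhi])
  also have "\<dots> = card (UNIV :: 'a set) ^ card P" unfolding VP_def by (rule card_funs0[OF finP])
  also have "\<dots> = card (D \<rightarrow>\<^sub>E (UNIV :: 'a set))" unfolding card_PiE[OF finD] cPD by simp
  finally have cc: "card (Phi ` VP) = card (D \<rightarrow>\<^sub>E (UNIV :: 'a set))" .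
  have finPi: "finite (D \<rightarrow>\<^sub>E (UNIV :: 'a set))" by (rule finite_PiE[OF finD]) simp
  have PhiEq: "Phi ` VP = D \<rightarrow>\<^sub>E (UNIV :: 'a set)"
    by (rule card_subset_eq[OF finPi PhiPi cc])
  have "restrict (ind N0) D \<in> D \<rightarrow>\<^sub>E (UNIV :: 'a set)" by (simp only: restrict_PiE_iff, blast)
  then have "restrict (ind N0) D \<in> Phi ` VP" unfolding PhiEq .
  then obtain v0 where v0': "restrict (ind N0) D = Phi v0" "v0 \<in> VP" by (rule imageE)
  have v0: "v0 \<in> VP" "Phi v0 = restrict (ind N0) D" using v0' by simp_all
  have v0e: "(\<Sum>\<alpha>\<in>P. v0 \<alpha> * evalMon m e \<alpha>) = ind N0 e" if "e \<in> D" for e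
  proof -
    have "Phi v0 e = restrict (ind N0) D e" using v0(2) by (rule fun_cong)
    then show ?thesis unfolding Phi_def restrict_apply' [OF that] .
  qed
  have dual2: "v0 \<in> dual_code P (code m S L2)"
    unfolding dual_code_def
  proof (intro CollectI conjI allI impI ballI)
    show "x \<notin> P \<Longrightarrow> v0 x = 0" for x using v0(1) by (simp add: VP_def)
    fix c assume "c \<in> code m S L2"
    then obtain a where ca: "c = vec a" and a: "\<forall>N. N \<notin> L2 \<longrightarrow> a N = 0"
      unfolding code_char[OF L2D] by blast
    have "(\<Sum>x\<in>P. v0 x * c x) = (\<Sum>N\<in>D. a N * ind N0 N)"
      unfolding ca swap by (intro sum.cong refl) (simp add: v0e)
    also have "\<dots> = (\<Sum>N\<in>D. ind N0 N * a N)" by (simp add: mult.commute)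
    also have "\<dots> = a N0" unfolding ind_def by (rule sum_ind[OF finD N0D])
    also have "\<dots> = 0" using a N0(2) by simp
    finally show "(\<Sum>x\<in>P. v0 x * c x) = 0" .
  qed
  have dual1: "v0 \<notin> dual_code P (code m S L1)"
  proof
    assume "v0 \<in> dual_code P (code m S L1)"
    then have "(\<Sum>x\<in>P. v0 x * ev N0 x) = 0" using ev_in[OF L1D N0(1)] by (simp add: dual_code_def)
    then show False using swap_ind[OF N0D, of v0] v0e[OF N0D] by (simp add: ind_def)
  qed
  have part4: "M1 P (dual_code P (code m S L2)) (dual_code P (code m S L1)) \<ge> \<delta>perp"
  proof (rule M1_ge[OF finP])
    show "dual_code P (code m S L2) - dual_code P (code m S L1) \<noteq> {}" using dual1 dual2 by blast
    show "\<forall>x\<in>dual_code P (code m S L2) - dual_code P (code m S L1). \<delta>perp \<le> hamming_wt P x"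
    proof
      fix x assume x: "x \<in> dual_code P (code m S L2) - dual_code P (code m S L1)"
      have "\<exists>x0\<in>P. x x0 \<noteq> 0"
      proof (rule ccontr)
        assume "\<not> ?thesis"
        then have "\<forall>y. x y = 0" using x by (auto simp: dual_code_def)
        then have "x \<in> dual_code P (code m S L1)" by (simp add: dual_code_def)
        then show False using x by blast
      qed
      then obtain x0 where "x0 \<in> P" "x x0 \<noteq> 0" by blast
      then obtain e where e: "e \<in> D" "(\<Sum>\<alpha>\<in>P. x \<alpha> * evalMon m e \<alpha>) \<noteq> 0"
        and De: "Dperp m e \<le> card {\<alpha>\<in>P. x \<alpha> \<noteq> 0}" using dualfp by blast
      have "e \<notin> L2"
      proof
        assume "e \<in> L2"
        then have "ev e \<in> code m S L2" by (rule ev_in[OF L2D])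
        then have "(\<Sum>\<alpha>\<in>P. x \<alpha> * ev e \<alpha>) = 0" using x by (simp add: dual_code_def)
        then show False using swap_ind[OF e(1), of x] e(2) by simp
      qed
      then have "\<delta>perp \<le> Dperp m e" using e(1) unfolding L2 by simp
      then show "\<delta>perp \<le> hamming_wt P x" using De unfolding hamming_wt_def by simp
    qed
  qed
  show ?thesis using part1 part2 part3 part4 by blast
qed

end
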